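(* Let $n\geq 2$ and let $C$ be a $2$-null CRC in $G_n$ with covering radius $\rho\geq 2$, $c_1\leq 2$, $c_2=3$, and $\mathbf{0}\in C$. Then: (1) every cap contains at most one word of $C$; in particular $C$ contains at most $2n$ words of type $3100$; (2) every word of type $1100$ lying in $C_2$ is at distance two from exactly one word of weight four in $C$, and this word is of type $3100$.
   Context: $G_n$: vertex set $\mathbb{Z}^n$, $x\sim y$ iff $\sum_i|x_i-y_i|=1$; $d$ its distance; weight of $x$ is $d(x,\mathbf{0})$; $e_i$ is the $i$-th unit vector. For a code $C$ with covering radius $\rho$, $C_i=\{v:d(v,C)=i\}$. $C$ is a CRC if for all $i,j$ every vertex of $C_i$ has the same number $\alpha_{ij}$ of neighbours in $C_j$, with $\alpha_{ij}=0$ for $|i-j|>1$; $a_i=\alpha_{ii}$, $b_i=\alpha_{i,i+1}$, $c_i=\alpha_{i,i-1}$. $C$ is $r$-null if $a_0=\cdots=a_{r-1}=0$. The type of a word of weight at most four is the nonincreasing sequence of its four largest absolute entry values; type $1100$: exactly two entries $\pm1$, others $0$; type $3100$: one entry $\pm3$, one entry $\pm1$, others $0$. A cap is one of the $2n$ sets $\{\varepsilon 3e_i\pm e_j: j\in\{1,\ldots,n\}\setminus\{i\}\}$ for $i\in\{1,\ldots,n\}$, $\varepsilon\in\{1,-1\}$; the set of type $3100$ words is the disjoint union of the caps. *)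

theory Defs
  imports Main
begin

text \<open>Vertices of G_n: integer vectors x :: nat => int supported on {0..<n}
  (coordinates are 0-indexed: coordinate i in the paper is index i-1 here).\<close>

definition verts :: "nat \<Rightarrow> (nat \<Rightarrow> int) set" where
  "verts n = {x. \<forall>i\<ge>n. x i = 0}"

text \<open>Distance of G_n (the graph distance of the grid Z^n is the l1 distance).\<close>
definition gdist :: "nat \<Rightarrow> (nat \<Rightarrow> int) \<Rightarrow> (nat \<Rightarrow> int) \<Rightarrow> nat" where
  "gdist n x y = nat (\<Sum>i<n. \<bar>x i - y i\<bar>)"

definition adj :: "nat \<Rightarrow> (nat \<Rightarrow> int) \<Rightarrow> (nat \<Rightarrow> int) \<Rightarrow> bool" where
  "adj n x y \<longleftrightarrow> (\<Sum>i<n. \<bar>x i - y i\<bar>) = 1"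

definition zerov :: "nat \<Rightarrow> int" where
  "zerov = (\<lambda>_. 0)"

definition unitv :: "nat \<Rightarrow> nat \<Rightarrow> int" where
  "unitv i = (\<lambda>k. if k = i then 1 else 0)"

definition weight :: "nat \<Rightarrow> (nat \<Rightarrow> int) \<Rightarrow> nat" where
  "weight n x = gdist n x zerov"

definition distC :: "nat \<Rightarrow> (nat \<Rightarrow> int) set \<Rightarrow> (nat \<Rightarrow> int) \<Rightarrow> nat" where
  "distC n C v = (LEAST k. \<exists>c\<in>C. gdist n v c = k)"

definition layer :: "nat \<Rightarrow> (nat \<Rightarrow> int) set \<Rightarrow> nat \<Rightarrow> (nat \<Rightarrow> int) set" where
  "layer n C i = {v \<in> verts n. distC n C v = i}"

definition covering_radius :: "nat \<Rightarrow> (nat \<Rightarrow> int) set \<Rightarrow> nat \<Rightarrow> bool" where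
  "covering_radius n C \<rho> \<longleftrightarrow>
     (\<forall>v\<in>verts n. distC n C v \<le> \<rho>) \<and> (\<exists>v\<in>verts n. distC n C v = \<rho>)"

definition is_CRC :: "nat \<Rightarrow> (nat \<Rightarrow> int) set \<Rightarrow> nat \<Rightarrow> (nat \<Rightarrow> nat \<Rightarrow> nat) \<Rightarrow> bool" where
  "is_CRC n C \<rho> \<alpha> \<longleftrightarrow>
     C \<subseteq> verts n \<and> C \<noteq> {} \<and> covering_radius n C \<rho> \<and>
     (\<forall>i j. \<forall>v\<in>layer n C i. card {w \<in> verts n. adj n v w \<and> w \<in> layer n C j} = \<alpha> i j) \<and>
     (\<forall>i j. (i > j + 1 \<or> j > i + 1) \<longrightarrow> \<alpha> i j = 0)"

text \<open>r-null: a_0 = ... = a_(r-1) = 0.\<close>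
definition r_null :: "nat \<Rightarrow> (nat \<Rightarrow> nat \<Rightarrow> nat) \<Rightarrow> bool" where
  "r_null r \<alpha> \<longleftrightarrow> (\<forall>i<r. \<alpha> i i = 0)"

definition type1100 :: "nat \<Rightarrow> (nat \<Rightarrow> int) \<Rightarrow> bool" where
  "type1100 n x \<longleftrightarrow> x \<in> verts n \<and>
     (\<exists>i j. i < n \<and> j < n \<and> i \<noteq> j \<and> \<bar>x i\<bar> = 1 \<and> \<bar>x j\<bar> = 1 \<and>
        (\<forall>k. k \<noteq> i \<and> k \<noteq> j \<longrightarrow> x k = 0))"

definition type3100 :: "nat \<Rightarrow> (nat \<Rightarrow> int) \<Rightarrow> bool" where
  "type3100 n x \<longleftrightarrow> x \<in> verts n \<and>
     (\<exists>i j. i < n \<and> j < n \<and> i \<noteq> j \<and> \<bar>x i\<bar> = 3 \<and> \<bar>x j\<bar> = 1 \<and>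
        (\<forall>k. k \<noteq> i \<and> k \<noteq> j \<longrightarrow> x k = 0))"

definition cap :: "nat \<Rightarrow> nat \<Rightarrow> int \<Rightarrow> (nat \<Rightarrow> int) set" where
  "cap n i \<epsilon> = {(\<lambda>k. \<epsilon> * 3 * unitv i k + s * unitv j k) | j s. j < n \<and> j \<noteq> i \<and> (s = 1 \<or> s = -1)}"

end

theory Submission
  imports Defs "HOL-Library.Function_Algebras"
begin


definition nrm :: "nat \<Rightarrow> (nat \<Rightarrow> int) \<Rightarrow> int" where
  "nrm n v = (\<Sum>i<n. \<bar>v i\<bar>)"

definition ev :: "nat \<Rightarrow> int \<Rightarrow> nat \<Rightarrow> int" where
  "ev k s = (\<lambda>m. if m = k then s else 0)"

lemma ev_apply: "ev k s m = (if m = k then s else 0)"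
  by (simp add: ev_def)

lemma neqI: "f i \<noteq> g i \<Longrightarrow> f \<noteq> g" by auto

lemma nrm_ge0: "nrm n v \<ge> 0"
  unfolding nrm_def by (simp add: sum_nonneg)

lemma gdist_nrm: "gdist n x y = nat (nrm n (x - y))"
  unfolding gdist_def nrm_def by simp

lemma adj_nrm: "adj n x y \<longleftrightarrow> nrm n (y - x) = 1"
  unfolding adj_def nrm_def by (simp add: abs_minus_commute)

lemma zerov0: "zerov = 0"
  by (simp add: zerov_def fun_eq_iff)

lemma weight_nrm: "weight n x = nat (nrm n x)"
  unfolding weight_def gdist_nrm zerov0 by simp

lemma adj_sym: "adj n x y \<longleftrightarrow> adj n y x"
  unfolding adj_def by (simp add: abs_minus_commute)

lemma verts_add: "x \<in> verts n \<Longrightarrow> y \<in> verts n \<Longrightarrow> x + y \<in> verts n"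
  by (simp add: verts_def)
lemma verts_diff: "x \<in> verts n \<Longrightarrow> y \<in> verts n \<Longrightarrow> x - y \<in> verts n"
  by (simp add: verts_def)
lemma verts_ev: "k < n \<Longrightarrow> ev k s \<in> verts n"
  by (simp add: verts_def ev_def)
lemma verts_0: "0 \<in> verts n"
  by (simp add: verts_def)

lemma nrm_upd:
  assumes "k < n"
  shows "nrm n (x + ev k s) = nrm n x - \<bar>x k\<bar> + \<bar>x k + s\<bar>"
proof -
  have k: "k \<in> {..<n}" using assms by simp
  have 1: "nrm n (x + ev k s) = \<bar>(x + ev k s) k\<bar> + (\<Sum>i\<in>{..<n}-{k}. \<bar>(x + ev k s) i\<bar>)"
    unfolding nrm_def by (rule sum.remove[OF _ k]) simp
  have 2: "(\<Sum>i\<in>{..<n}-{k}. \<bar>(x + ev k s) i\<bar>) = (\<Sum>i\<in>{..<n}-{k}. \<bar>x i\<bar>)"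
    by (rule sum.cong) (auto simp: ev_def)
  have 3: "nrm n x = \<bar>x k\<bar> + (\<Sum>i\<in>{..<n}-{k}. \<bar>x i\<bar>)"
    unfolding nrm_def by (rule sum.remove[OF _ k]) simp
  have 4: "\<bar>(x + ev k s) k\<bar> = \<bar>x k + s\<bar>" by (simp add: ev_def)
  show ?thesis unfolding 1 2 3 4 by simp
qed

lemma nrm_ev: "k < n \<Longrightarrow> nrm n (ev k s) = \<bar>s\<bar>"
  using nrm_upd[of k n 0 s] by (simp add: nrm_def)

lemma nrm0:
  assumes "v \<in> verts n" "nrm n v = 0" shows "v = 0"
proof -
  have "\<forall>i\<in>{..<n}. \<bar>v i\<bar> = 0"
    using assms(2) unfolding nrm_def by (subst sum_nonneg_eq_0_iff[symmetric]) auto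
  show ?thesis
  proof (rule ext)
    fix i show "v i = 0 i"
    proof (cases "i < n")
      case True then show ?thesis using \<open>\<forall>i\<in>{..<n}. \<bar>v i\<bar> = 0\<close> by simp
    next
      case False then show ?thesis using assms(1) by (simp add: verts_def)
    qed
  qed
qed

lemma step:
  assumes "v \<in> verts n" "nrm n v > 0"
  shows "\<exists>k<n. \<exists>s. (s = 1 \<or> s = -1) \<and> nrm n (v + ev k s) = nrm n v - 1"
proof -
  have "\<exists>k<n. v k \<noteq> 0"
  proof (rule ccontr)
    assume "\<not> ?thesis"
    then have "nrm n v = 0" unfolding nrm_def by simp
    then show False using assms by simp
  qed
  then obtain k where k: "k < n" "v k \<noteq> 0" by blast
  define s where "s = (if v k > 0 then -1 else (1::int))"
  have "nrm n (v + ev k s) = nrm n v - 1"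
    using nrm_upd[OF k(1), of v s] k(2) by (auto simp: s_def)
  moreover have "s = 1 \<or> s = -1" by (simp add: s_def)
  ultimately show ?thesis using k(1) by blast
qed

lemma adj_char:
  assumes "x \<in> verts n" "w \<in> verts n" "adj n x w"
  shows "\<exists>k<n. \<exists>s. (s = 1 \<or> s = -1) \<and> w = x + ev k s"
proof -
  have v: "w - x \<in> verts n" using assms by (simp add: verts_diff)
  have "nrm n (w - x) = 1" using assms(3) by (simp add: adj_nrm)
  then obtain k s where ks: "k < n" "s = 1 \<or> s = -1" "nrm n (w - x + ev k s) = 0"
    using step[OF v] by force
  then have z: "w - x + ev k s = 0" using nrm0 verts_add[OF v verts_ev[OF ks(1)]] by blast
  have h: "\<And>m. w m - x m + ev k s m = 0" using fun_cong[OF z] by simp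
  have "w = x + ev k (-s)"
  proof (rule ext)
    fix m show "w m = (x + ev k (-s)) m" using h[of m] by (auto simp: ev_def)
  qed
  then show ?thesis using ks by (intro exI[of _ k]) auto
qed

lemma adj_I:
  assumes "w = x + ev k s" "k < n" "\<bar>s\<bar> = 1"
  shows "adj n x w"
  using assms by (simp add: adj_nrm nrm_ev)

lemma nbrs_finite:
  assumes "x \<in> verts n"
  shows "finite {w \<in> verts n. adj n x w}"
proof -
  have "{w \<in> verts n. adj n x w} \<subseteq> (\<lambda>(k,s). x + ev k s) ` ({..<n} \<times> {1,-1})"
  proof
    fix w assume "w \<in> {w \<in> verts n. adj n x w}"
    then have w: "w \<in> verts n" "adj n x w" by auto
    then obtain k s where "k<n" "s = 1 \<or> s = -1" "w = x + ev k s" using adj_char assms by blast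
    then show "w \<in> (\<lambda>(k,s). x + ev k s) ` ({..<n} \<times> {1,-1})" by auto
  qed
  then show ?thesis by (rule finite_subset) simp
qed

lemma nrm_swap: "nrm n (x - y) = nrm n (y - x)"
  unfolding nrm_def by (simp add: abs_minus_commute)

lemma gd0: "x \<in> verts n \<Longrightarrow> y \<in> verts n \<Longrightarrow> gdist n x y = 0 \<longleftrightarrow> x = y"
proof -
  assume xy: "x \<in> verts n" "y \<in> verts n"
  have "gdist n x y = 0 \<longleftrightarrow> nrm n (x - y) = 0"
    unfolding gdist_nrm using nrm_ge0[of n "x - y"] by linarith
  also have "\<dots> \<longleftrightarrow> x = y"
  proof
    assume "nrm n (x - y) = 0"
    then have "x - y = 0" using nrm0 verts_diff[OF xy] by blast
    then show "x = y" by simp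
  qed (simp add: nrm_def)
  finally show ?thesis .
qed

lemma gd1: "gdist n x y = 1 \<longleftrightarrow> adj n x y"
  unfolding gdist_nrm adj_nrm using nrm_ge0[of n "x - y"] nrm_swap[of n x y] by linarith

lemma nrm_adj:
  assumes "x \<in> verts n" "w \<in> verts n" "adj n x w"
  shows "nrm n w = nrm n x + 1 \<or> nrm n w = nrm n x - 1"
proof -
  obtain k s where "k < n" "s = 1 \<or> s = -1" "w = x + ev k s" using adj_char[OF assms] by blast
  then show ?thesis using nrm_upd[of k n x s] by (auto simp: abs_if)
qed

locale crc =
  fixes n :: nat and C :: "(nat \<Rightarrow> int) set" and \<alpha> :: "nat \<Rightarrow> nat \<Rightarrow> nat"
  assumes n2: "n \<ge> 2" and Cv: "C \<subseteq> verts n"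
    and cnt: "\<And>i j v. v \<in> layer n C i \<Longrightarrow> card {w \<in> verts n. adj n v w \<and> w \<in> layer n C j} = \<alpha> i j"
    and a00: "\<alpha> 0 0 = 0" and a11: "\<alpha> 1 1 = 0" and c1: "\<alpha> 1 0 \<le> 2" and c2: "\<alpha> 2 1 = 3"
    and C0: "0 \<in> C"
begin

lemma distP: "\<exists>c\<in>C. gdist n v c = distC n C v"
  unfolding distC_def by (rule LeastI_ex) (use C0 in blast)

lemma distLe: "c \<in> C \<Longrightarrow> distC n C v \<le> gdist n v c"
  unfolding distC_def by (rule Least_le) blast

lemma layer_verts: "v \<in> layer n C i \<Longrightarrow> v \<in> verts n"
  by (simp add: layer_def)

lemma lay0: "v \<in> verts n \<Longrightarrow> v \<in> layer n C 0 \<longleftrightarrow> v \<in> C"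
proof
  assume v: "v \<in> verts n" "v \<in> layer n C 0"
  then obtain c where "c \<in> C" "gdist n v c = 0" using distP[of v] by (auto simp: layer_def)
  then show "v \<in> C" using gd0[OF v(1)] Cv by auto
next
  assume v: "v \<in> verts n" "v \<in> C"
  then have "distC n C v \<le> 0" using distLe[of v v] gd0[OF v(1) v(1)] by simp
  then show "v \<in> layer n C 0" using v by (simp add: layer_def)
qed

lemma lay1: "v \<in> verts n \<Longrightarrow> v \<notin> C \<Longrightarrow> c \<in> C \<Longrightarrow> adj n v c \<Longrightarrow> v \<in> layer n C 1"
proof -
  assume v: "v \<in> verts n" "v \<notin> C" "c \<in> C" "adj n v c"
  have le: "distC n C v \<le> 1" using distLe[OF v(3), of v] v(4) gd1[of n v c] by simp
  obtain c' where c': "c' \<in> C" "gdist n v c' = distC n C v" using distP by blast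
  have "distC n C v \<noteq> 0"
  proof
    assume "distC n C v = 0"
    then have "v = c'" using c' gd0[OF v(1)] Cv by auto
    then show False using v c' by simp
  qed
  then show ?thesis using le v by (simp add: layer_def)
qed

lemma lay1D: "v \<in> layer n C 1 \<Longrightarrow> v \<notin> C \<and> (\<exists>c\<in>C. adj n v c)"
proof -
  assume v: "v \<in> layer n C 1"
  have nC: "v \<notin> C"
  proof
    assume "v \<in> C"
    then have "distC n C v \<le> 0" using distLe[of v v] gd0[OF layer_verts[OF v] layer_verts[OF v]] by simp
    then show False using v by (simp add: layer_def)
  qed
  obtain c' where c': "c' \<in> C" "gdist n v c' = distC n C v" using distP by blast
  then show ?thesis using nC v gd1 by (auto simp: layer_def)
qed

lemma lay2: "v \<in> verts n \<Longrightarrow> v \<notin> C \<Longrightarrow> (\<forall>c\<in>C. \<not> adj n v c) \<Longrightarrow> c \<in> C \<Longrightarrow> gdist n v c = 2 \<Longrightarrow> v \<in> layer n C 2"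
proof -
  assume v: "v \<in> verts n" "v \<notin> C" "\<forall>c\<in>C. \<not> adj n v c" "c \<in> C" "gdist n v c = 2"
  have le: "distC n C v \<le> 2" using distLe[OF v(4), of v] v(5) by simp
  obtain c' where c': "c' \<in> C" "gdist n v c' = distC n C v" using distP by blast
  have "distC n C v \<noteq> 0"
  proof
    assume "distC n C v = 0"
    then have "v = c'" using c' gd0[OF v(1)] Cv by auto
    then show False using v c' by simp
  qed
  moreover have "distC n C v \<noteq> 1" using c' v(3) gd1 by auto
  ultimately show ?thesis using le v by (simp add: layer_def)
qed

lemma lay2D: "v \<in> layer n C 2 \<Longrightarrow> v \<notin> C \<and> (\<forall>c\<in>C. \<not> adj n v c)"
proof -
  assume v: "v \<in> layer n C 2"
  have nC: "v \<notin> C"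
  proof
    assume "v \<in> C"
    then have "distC n C v \<le> 0" using distLe[of v v] gd0[OF layer_verts[OF v] layer_verts[OF v]] by simp
    then show False using v by (simp add: layer_def)
  qed
  moreover have "\<forall>c\<in>C. \<not> adj n v c"
  proof (intro ballI notI)
    fix c assume "c \<in> C" "adj n v c"
    then have "distC n C v \<le> 1" using distLe[of c v] gd1[of n v c] by simp
    then show False using v by (simp add: layer_def)
  qed
  ultimately show ?thesis by blast
qed

lemma N1: "c \<in> C \<Longrightarrow> c' \<in> C \<Longrightarrow> \<not> adj n c c'"
proof
  assume c: "c \<in> C" "c' \<in> C" "adj n c c'"
  have cv: "c \<in> verts n" "c' \<in> verts n" using c Cv by auto
  let ?S = "{w \<in> verts n. adj n c w \<and> w \<in> layer n C 0}"
  have "card ?S = 0" using cnt[of c 0 0] a00 lay0[OF cv(1)] c by simp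
  moreover have "finite ?S" by (rule finite_subset[OF _ nbrs_finite[OF cv(1)]]) auto
  moreover have "c' \<in> ?S" using c cv lay0 by auto
  ultimately show False by auto
qed

lemma N2: "v \<in> layer n C 1 \<Longrightarrow> w \<in> layer n C 1 \<Longrightarrow> \<not> adj n v w"
proof
  assume c: "v \<in> layer n C 1" "w \<in> layer n C 1" "adj n v w"
  have cv: "v \<in> verts n" "w \<in> verts n" using c layer_verts by auto
  let ?S = "{u \<in> verts n. adj n v u \<and> u \<in> layer n C 1}"
  have "card ?S = 0" using cnt[OF c(1), of 1] a11 by simp
  moreover have "finite ?S" by (rule finite_subset[OF _ nbrs_finite[OF cv(1)]]) auto
  moreover have "w \<in> ?S" using c cv by auto
  ultimately show False by auto
qed

lemma L1: "w \<in> verts n \<Longrightarrow> c \<in> C \<Longrightarrow> adj n w c \<Longrightarrow> w \<in> layer n C 1"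
proof -
  assume w: "w \<in> verts n" "c \<in> C" "adj n w c"
  have "w \<notin> C" using N1[of w c] w by auto
  then show ?thesis using lay1 w by blast
qed

lemma unit_l1: "k < n \<Longrightarrow> \<bar>s\<bar> = 1 \<Longrightarrow> ev k s \<in> layer n C 1"
proof -
  assume ks: "k < n" "\<bar>s\<bar> = 1"
  have "adj n 0 (ev k s)" by (rule adj_I[of _ _ k s]) (use ks in auto)
  then show ?thesis using L1[OF verts_ev[OF ks(1)] C0] adj_sym by blast
qed

lemma LB3:
  assumes v: "v \<in> layer n C 1" and c: "c1 \<in> C" "c2 \<in> C" "c3 \<in> C"
    and a: "adj n v c1" "adj n v c2" "adj n v c3" and d: "c1 \<noteq> c2" "c1 \<noteq> c3" "c2 \<noteq> c3"
  shows False
proof -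
  have vv: "v \<in> verts n" using v layer_verts by auto
  let ?S = "{w \<in> verts n. adj n v w \<and> w \<in> layer n C 0}"
  have "card ?S \<le> 2" using cnt[OF v, of 0] c1 by simp
  moreover have "finite ?S" by (rule finite_subset[OF _ nbrs_finite[OF vv]]) auto
  moreover have "{c1,c2,c3} \<subseteq> ?S" using c a Cv lay0 by auto
  ultimately have "card {c1,c2,c3} \<le> card ?S" by (intro card_mono)
  moreover have "card {c1,c2,c3} = 3" using d by (simp add: card_insert_if)
  ultimately show False using \<open>card ?S \<le> 2\<close> by simp
qed

lemma LA4:
  assumes x: "x \<in> layer n C 2"
    and a: "adj n x p" "adj n x q" "adj n x r" "adj n x w"
    and l: "p \<in> layer n C 1" "q \<in> layer n C 1" "r \<in> layer n C 1" "w \<in> layer n C 1"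
    and d: "p \<noteq> q" "p \<noteq> r" "p \<noteq> w" "q \<noteq> r" "q \<noteq> w" "r \<noteq> w"
  shows False
proof -
  have xv: "x \<in> verts n" using x layer_verts by auto
  let ?S = "{u \<in> verts n. adj n x u \<and> u \<in> layer n C 1}"
  have "card ?S = 3" using cnt[OF x, of 1] c2 by simp
  moreover have "finite ?S" by (rule finite_subset[OF _ nbrs_finite[OF xv]]) auto
  moreover have "{p,q,r,w} \<subseteq> ?S" using a l layer_verts by auto
  ultimately have "card {p,q,r,w} \<le> card ?S" by (intro card_mono)
  moreover have "card {p,q,r,w} = 4" using d by (simp add: card_insert_if)
  ultimately show False using \<open>card ?S = 3\<close> by simp
qed

lemma LA_ex:
  assumes x: "x \<in> layer n C 2"
    and a: "adj n x p" "adj n x q" and l: "p \<in> layer n C 1" "q \<in> layer n C 1"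
  shows "\<exists>r. adj n x r \<and> r \<in> layer n C 1 \<and> r \<noteq> p \<and> r \<noteq> q"
proof (rule ccontr)
  assume h: "\<not> ?thesis"
  let ?S = "{u \<in> verts n. adj n x u \<and> u \<in> layer n C 1}"
  have "card ?S = 3" using cnt[OF x, of 1] c2 by simp
  moreover have "?S \<subseteq> {p, q}" using h by auto
  moreover have "card ?S \<le> card {p,q}" using \<open>?S \<subseteq> {p,q}\<close> by (intro card_mono) auto
  ultimately have "3 \<le> card {p,q}" by simp
  moreover have "card {p,q} \<le> 2" by (simp add: card_insert_if)
  ultimately show False by simp
qed

lemma SN:
  assumes v': "v' \<in> layer n C 1" and c: "c1 \<in> C" "c2 \<in> C" "adj n v' c1" "adj n v' c2" "c1 \<noteq> c2"
    and v: "v \<in> layer n C 1" and c0: "c \<in> C" "adj n v c"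
  shows "\<exists>d\<in>C. adj n v d \<and> d \<noteq> c"
proof (rule ccontr)
  assume h: "\<not> ?thesis"
  have vv: "v' \<in> verts n" using v' layer_verts by auto
  let ?S = "{w \<in> verts n. adj n v' w \<and> w \<in> layer n C 0}"
  have "finite ?S" by (rule finite_subset[OF _ nbrs_finite[OF vv]]) auto
  moreover have "{c1,c2} \<subseteq> ?S" using c Cv lay0 by auto
  ultimately have "card {c1,c2} \<le> card ?S" by (intro card_mono)
  then have "2 \<le> card ?S" using c(5) by simp
  then have "2 \<le> \<alpha> 1 0" using cnt[OF v', of 0] by simp
  then have "card {w \<in> verts n. adj n v w \<and> w \<in> layer n C 0} \<ge> 2" using cnt[OF v, of 0] by simp
  moreover have "{w \<in> verts n. adj n v w \<and> w \<in> layer n C 0} \<subseteq> {c}"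
  proof
    fix w assume w: "w \<in> {w \<in> verts n. adj n v w \<and> w \<in> layer n C 0}"
    then have "w \<in> C" using lay0[of w] by blast
    then show "w \<in> {c}" using h w by blast
  qed
  moreover have "card {w \<in> verts n. adj n v w \<and> w \<in> layer n C 0} \<le> card {c}"
    using calculation(2) by (intro card_mono) auto
  ultimately show False by simp
qed

end




context crc
begin

lemma D2: "c \<in> C \<Longrightarrow> nrm n c \<noteq> 1 \<and> nrm n c \<noteq> 3"
proof
  assume c: "c \<in> C"
  have cv: "c \<in> verts n" using c Cv by auto
  show "nrm n c \<noteq> 1"
  proof
    assume "nrm n c = 1"
    then have "adj n 0 c" by (simp add: adj_nrm)
    then show False using N1[OF C0 c] by simp
  qed
  show "nrm n c \<noteq> 3"
  proof
    assume h: "nrm n c = 3"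
    obtain k1 s1 where k1: "k1 < n" "s1 = 1 \<or> s1 = -1" "nrm n (c + ev k1 s1) = 2"
      using step[OF cv] h by force
    define z where "z = c + ev k1 s1"
    have zv: "z \<in> verts n" unfolding z_def using cv k1 by (simp add: verts_add verts_ev)
    obtain k2 s2 where k2: "k2 < n" "s2 = 1 \<or> s2 = -1" "nrm n (z + ev k2 s2) = 1"
      using step[OF zv] k1 unfolding z_def by force
    define z' where "z' = z + ev k2 s2"
    have z'v: "z' \<in> verts n" unfolding z'_def using zv k2 by (simp add: verts_add verts_ev)
    have "adj n c z" unfolding z_def by (rule adj_I[of _ _ k1 s1]) (use k1 in auto)
    then have z1: "z \<in> layer n C 1" using L1[OF zv c] adj_sym by blast
    have "adj n 0 z'" using k2(3) unfolding z'_def by (simp add: adj_nrm)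
    then have z'1: "z' \<in> layer n C 1" using L1[OF z'v C0] adj_sym by blast
    have "adj n z z'" unfolding z'_def by (rule adj_I[of _ _ k2 s2]) (use k2 in auto)
    then show False using N2[OF z1 z'1] by simp
  qed
qed

lemma W2L2:
  assumes v: "v \<in> verts n" "nrm n v = 2" "v \<notin> C"
  shows "v \<in> layer n C 2"
proof (rule lay2[OF v(1) v(3) _ C0])
  show "\<forall>c\<in>C. \<not> adj n v c"
  proof (intro ballI notI)
    fix c assume c: "c \<in> C" "adj n v c"
    have "nrm n c = 3 \<or> nrm n c = 1" using nrm_adj[OF v(1) _ c(2)] c Cv v(2) by auto
    then show False using D2[OF c(1)] by blast
  qed
  show "gdist n v 0 = 2" using v(2) by (simp add: gdist_nrm)
qed

lemma pm1: "\<bar>s::int\<bar> = 1 \<longleftrightarrow> s = 1 \<or> s = -1" by auto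

lemma noQ:
  assumes k: "k < n" "\<bar>s\<bar> = 1"
  shows "ev k (2*s) \<notin> C"
proof
  assume c2: "ev k (2*s) \<in> C"
  define j where "j = (if k = 0 then 1 else (0::nat))"
  have j: "j < n" "j \<noteq> k" using n2 by (auto simp: j_def)
  define a where "a = ev k s"
  have av: "a \<in> verts n" unfolding a_def using k by (simp add: verts_ev)
  have a1: "a \<in> layer n C 1" unfolding a_def using unit_l1 k by blast
  have a0: "adj n a 0" using adj_I[of a 0 k s] k adj_sym unfolding a_def by auto
  have a2: "adj n a (ev k (2*s))"
    by (rule adj_I[of _ _ k s]) (use k in \<open>auto simp: a_def ev_def\<close>)
  have n02: "0 \<noteq> ev k (2*s)" by (rule neqI[of _ k]) (use k in \<open>simp add: ev_def\<close>)
  have P: "ev j \<sigma> - a \<in> C" if \<sigma>: "\<bar>\<sigma>\<bar> = 1" for \<sigma>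
  proof -
    define b where "b = ev j \<sigma>"
    define x where "x = a + b"
    have bv: "b \<in> verts n" unfolding b_def using j by (simp add: verts_ev)
    have xv: "x \<in> verts n" unfolding x_def using av bv by (simp add: verts_add)
    have ax: "adj n a x" unfolding x_def b_def by (rule adj_I[of _ _ j \<sigma>]) (use j \<sigma> in auto)
    have xnC: "x \<notin> C"
    proof
      assume "x \<in> C"
      moreover have "0 \<noteq> x" by (rule neqI[of _ j]) (use j \<sigma> in \<open>auto simp: x_def a_def b_def ev_def\<close>)
      moreover have "ev k (2*s) \<noteq> x" by (rule neqI[of _ j]) (use j \<sigma> in \<open>auto simp: x_def a_def b_def ev_def\<close>)
      ultimately show False using LB3[OF a1 C0 c2 _ a0 a2 ax n02] by blast
    qed
    have "nrm n x = 2" unfolding x_def b_def using nrm_upd[OF j(1), of a \<sigma>] nrm_ev[OF k(1), of s] k \<sigma> j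
      by (simp add: a_def ev_def)
    then have x2: "x \<in> layer n C 2" using W2L2 xv xnC by blast
    have b1: "b \<in> layer n C 1" unfolding b_def using unit_l1 j \<sigma> by blast
    have b0: "adj n b 0" using adj_I[of b 0 j \<sigma>] j \<sigma> adj_sym unfolding b_def by auto
    have "a \<noteq> 0" by (rule neqI[of _ k]) (use k in \<open>simp add: a_def ev_def\<close>)
    then obtain d where d: "d \<in> C" "adj n b d" "d \<noteq> 0"
      using SN[OF a1 C0 c2 a0 a2 n02 b1 C0 b0] by blast
    have dv: "d \<in> verts n" using d Cv by auto
    obtain m \<tau> where m: "m < n" "\<tau> = 1 \<or> \<tau> = -1" "d = b + ev m \<tau>" using adj_char[OF bv dv d(2)] by blast
    define w where "w = x + ev m \<tau>"
    have wv: "w \<in> verts n" unfolding w_def using xv m by (simp add: verts_add verts_ev)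
    have xw: "adj n x w" unfolding w_def by (rule adj_I[of _ _ m \<tau>]) (use m in auto)
    have dw: "d = w + ev k (-s)" unfolding w_def x_def m(3) a_def by (rule ext) (simp add: ev_def)
    have "adj n w d" by (rule adj_I[OF dw k(1)]) (use k in simp)
    then have w1: "w \<in> layer n C 1" using L1[OF wv d(1)] by blast
    have xa: "adj n x a" by (rule adj_I[of _ _ j "-\<sigma>"]) (use j \<sigma> in \<open>auto simp: x_def b_def fun_eq_iff ev_def\<close>)
    have xb: "adj n x b" by (rule adj_I[of _ _ k "-s"]) (use k in \<open>auto simp: x_def a_def fun_eq_iff ev_def\<close>)
    define e where "e = ev k (2*s) + b"
    have ev': "e \<in> verts n" unfolding e_def using bv k by (simp add: verts_add verts_ev)
    have xe: "adj n x e" by (rule adj_I[of _ _ k s]) (use k in \<open>auto simp: x_def a_def e_def fun_eq_iff ev_def\<close>)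
    have "adj n e (ev k (2*s))" by (rule adj_I[of _ _ j "-\<sigma>"]) (use j \<sigma> in \<open>auto simp: e_def b_def fun_eq_iff ev_def\<close>)
    then have e1: "e \<in> layer n C 1" using L1[OF ev' c2] by blast
    have a1': "a \<in> layer n C 1" by (fact a1)
    have dab: "a \<noteq> b" by (rule neqI[of _ k]) (use k j in \<open>simp add: a_def b_def ev_def\<close>)
    have dae: "a \<noteq> e" by (rule neqI[of _ k]) (use k j in \<open>simp add: a_def e_def b_def ev_def\<close>)
    have dbe: "b \<noteq> e" by (rule neqI[of _ k]) (use k j in \<open>simp add: e_def b_def ev_def\<close>)
    have "w = a \<or> w = b \<or> w = e"
      using LA4[OF x2 xa xb xe xw a1 b1 e1 w1 dab dae _ dbe] by blast
    moreover have "w \<noteq> a"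
    proof
      assume "w = a"
      then have "d = 0" unfolding dw by (rule ssubst) (rule ext, simp add: a_def ev_def)
      then show False using d by simp
    qed
    moreover have "w \<noteq> e"
    proof
      assume "w = e"
      then have "d = x" unfolding dw by (rule ssubst) (rule ext, simp add: a_def x_def e_def ev_def)
      then show False using d xnC by simp
    qed
    ultimately have "w = b" by blast
    then have "d = ev j \<sigma> - a" unfolding dw by (rule ssubst) (rule ext, simp add: a_def b_def ev_def)
    then show ?thesis using d by simp
  qed
  have c1': "ev j 1 - a \<in> C" using P[of 1] by simp
  have c2': "ev j (-1) - a \<in> C" using P[of "-1"] by simp
  have m1: "ev k (-s) \<in> layer n C 1" using unit_l1 k by auto
  have "adj n (ev k (-s)) 0" using adj_I[of "ev k (-s)" 0 k "-s"] k adj_sym by (auto simp: fun_eq_iff ev_def)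
  moreover have "adj n (ev k (-s)) (ev j 1 - a)"
    by (rule adj_I[of _ _ j 1]) (use j in \<open>auto simp: a_def fun_eq_iff ev_def\<close>)
  moreover have "adj n (ev k (-s)) (ev j (-1) - a)"
    by (rule adj_I[of _ _ j "-1"]) (use j in \<open>auto simp: a_def fun_eq_iff ev_def\<close>)
  moreover have "0 \<noteq> ev j 1 - a" by (rule neqI[of _ j]) (use j in \<open>simp add: a_def ev_def\<close>)
  moreover have "0 \<noteq> ev j (-1) - a" by (rule neqI[of _ j]) (use j in \<open>simp add: a_def ev_def\<close>)
  moreover have "ev j 1 - a \<noteq> ev j (-1) - a" by (rule neqI[of _ j]) (use j in \<open>simp add: a_def ev_def\<close>)
  ultimately show False using LB3[OF m1 C0 c1' c2'] by blast
qed

end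



context crc
begin

lemma X2110half:
  assumes ij: "i < n" "j < n" "k < n" "i \<noteq> j" "k \<noteq> i" "k \<noteq> j" "\<bar>si\<bar> = 1" "\<bar>sj\<bar> = 1" "\<bar>t\<bar> = 1"
    and c: "ev i si + ev j sj + ev k (2*t) \<in> C"
  shows "ev i si + ev k t \<in> C"
proof (rule ccontr)
  assume h: "ev i si + ev k t \<notin> C"
  define c' where "c' = ev i si + ev j sj + ev k (2*t)"
  define x where "x = ev i si + ev k t"
  have xv: "x \<in> verts n" unfolding x_def using ij by (simp add: verts_add verts_ev)
  have "nrm n x = 2" unfolding x_def using nrm_upd[OF ij(3), of "ev i si" t] nrm_ev[OF ij(1), of si] ij
    by (simp add: ev_def)
  then have x2: "x \<in> layer n C 2" using W2L2 xv h unfolding x_def by blast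
  define p1 where "p1 = ev i si"
  define p2 where "p2 = ev k t"
  define p3 where "p3 = x + ev j sj"
  define p4 where "p4 = x + ev k t"
  have a1: "adj n x p1" by (rule adj_I[of _ _ k "-t"]) (use ij in \<open>auto simp: x_def p1_def fun_eq_iff ev_def\<close>)
  have a2: "adj n x p2" by (rule adj_I[of _ _ i "-si"]) (use ij in \<open>auto simp: x_def p2_def fun_eq_iff ev_def\<close>)
  have a3: "adj n x p3" by (rule adj_I[of _ _ j sj]) (use ij in \<open>auto simp: p3_def\<close>)
  have a4: "adj n x p4" by (rule adj_I[of _ _ k t]) (use ij in \<open>auto simp: p4_def\<close>)
  have l1: "p1 \<in> layer n C 1" unfolding p1_def using unit_l1 ij by blast
  have l2: "p2 \<in> layer n C 1" unfolding p2_def using unit_l1 ij by blast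
  have "adj n p3 c'" by (rule adj_I[of _ _ k t]) (use ij in \<open>auto simp: p3_def x_def c'_def fun_eq_iff ev_def\<close>)
  then have l3: "p3 \<in> layer n C 1" using L1[of p3 c'] c xv ij unfolding c'_def p3_def by (simp add: verts_add verts_ev)
  have "adj n p4 c'" by (rule adj_I[of _ _ j sj]) (use ij in \<open>auto simp: p4_def x_def c'_def fun_eq_iff ev_def\<close>)
  then have l4: "p4 \<in> layer n C 1" using L1[of p4 c'] c xv ij unfolding c'_def p4_def by (simp add: verts_add verts_ev)
  have "p1 \<noteq> p2" by (rule neqI[of _ i]) (use ij in \<open>auto simp: p1_def p2_def ev_def\<close>)
  moreover have "p1 \<noteq> p3" by (rule neqI[of _ j]) (use ij in \<open>auto simp: p1_def p3_def x_def ev_def\<close>)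
  moreover have "p1 \<noteq> p4" by (rule neqI[of _ k]) (use ij in \<open>auto simp: p1_def p4_def x_def ev_def\<close>)
  moreover have "p2 \<noteq> p3" by (rule neqI[of _ i]) (use ij in \<open>auto simp: p2_def p3_def x_def ev_def\<close>)
  moreover have "p2 \<noteq> p4" by (rule neqI[of _ i]) (use ij in \<open>auto simp: p2_def p4_def x_def ev_def\<close>)
  moreover have "p3 \<noteq> p4" by (rule neqI[of _ j]) (use ij in \<open>auto simp: p3_def p4_def x_def ev_def\<close>)
  ultimately show False using LA4[OF x2 a1 a2 a3 a4 l1 l2 l3 l4] by blast
qed

lemma X2110:
  assumes ij: "i < n" "j < n" "k < n" "i \<noteq> j" "k \<noteq> i" "k \<noteq> j" "\<bar>si\<bar> = 1" "\<bar>sj\<bar> = 1" "\<bar>t\<bar> = 1"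
    and c: "ev i si + ev j sj + ev k (2*t) \<in> C"
  shows False
proof -
  have A: "ev i si + ev k t \<in> C" using X2110half[OF ij c] .
  have "ev j sj + ev i si + ev k (2*t) \<in> C" using c by (simp add: add.commute add.left_commute)
  then have B: "ev j sj + ev k t \<in> C" using X2110half[of j i k sj si t] ij by auto
  have m1: "ev k t \<in> layer n C 1" using unit_l1 ij by auto
  have "adj n (ev k t) 0" using adj_I[of "ev k t" 0 k t] ij adj_sym by auto
  moreover have "adj n (ev k t) (ev i si + ev k t)"
    by (rule adj_I[of _ _ i si]) (use ij in \<open>auto simp: fun_eq_iff ev_def\<close>)
  moreover have "adj n (ev k t) (ev j sj + ev k t)"
    by (rule adj_I[of _ _ j sj]) (use ij in \<open>auto simp: fun_eq_iff ev_def\<close>)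
  moreover have "0 \<noteq> ev i si + ev k t" by (rule neqI[of _ i]) (use ij in \<open>auto simp: ev_def\<close>)
  moreover have "0 \<noteq> ev j sj + ev k t" by (rule neqI[of _ j]) (use ij in \<open>auto simp: ev_def\<close>)
  moreover have "ev i si + ev k t \<noteq> ev j sj + ev k t" by (rule neqI[of _ i]) (use ij in \<open>auto simp: ev_def\<close>)
  ultimately show False using LB3[OF m1 C0 A B] by blast
qed

end



context crc
begin

lemma AU:
  assumes ij: "i < n" "j < n" "i \<noteq> j" "\<bar>si\<bar> = 1" "\<bar>sj\<bar> = 1"
    and xd: "x = ev i si + ev j sj"
    and xl: "x \<in> layer n C 2"
    and kt: "k < n" "\<bar>t\<bar> = 1" "\<not>(k = i \<and> t = -si)" "\<not>(k = j \<and> t = -sj)"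
    and y1: "x + ev k t \<in> layer n C 1"
    and Aeq: "\<And>w. adj n x w \<Longrightarrow> w \<in> layer n C 1 \<Longrightarrow> w = ev i si \<or> w = ev j sj \<or> w = x + ev k t"
  shows "ev i si + ev k t \<notin> C"
proof
  assume c': "ev i si + ev k t \<in> C"
  define a where "a = ev i si"
  define b where "b = ev j sj"
  define u where "u = ev k t"
  define y where "y = x + ev k t"
  have xv: "x \<in> verts n" using xl layer_verts by auto
  have xnC: "x \<notin> C" using lay2D[OF xl] by blast
  consider "k = i" | "k = j" | "k \<noteq> i" "k \<noteq> j" by blast
  then show False
  proof cases
    case 1
    then have "t = si" using kt ij by (auto simp: abs_if split: if_splits)
    then have "ev i si + ev k t = ev i (2*si)" using 1 by (intro ext) (simp add: ev_def)
    then show False using c' noQ[OF ij(1) ij(4)] by simp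
  next
    case 2
    then have "t = sj" using kt ij by (auto simp: abs_if split: if_splits)
    then have "ev i si + ev k t = x" using 2 xd by simp
    then show False using c' xnC by simp
  next
    case 3
    have a1: "a \<in> layer n C 1" unfolding a_def using unit_l1 ij by blast
    have b1: "b \<in> layer n C 1" unfolding b_def using unit_l1 ij by blast
    have u1: "u \<in> layer n C 1" unfolding u_def using unit_l1 kt by blast
    have a0: "adj n a 0" using adj_I[of a 0 i si] ij adj_sym unfolding a_def by auto
    have b0: "adj n b 0" using adj_I[of b 0 j sj] ij adj_sym unfolding b_def by auto
    have u0: "adj n u 0" using adj_I[of u 0 k t] kt adj_sym unfolding u_def by auto
    have aau: "adj n a (a + u)" by (rule adj_I[of _ _ k t]) (use kt in \<open>auto simp: u_def\<close>)
    have n0au: "0 \<noteq> a + u" by (rule neqI[of _ i]) (use ij 3 in \<open>auto simp: a_def u_def ev_def\<close>)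
    have c'': "a + u \<in> C" using c' unfolding a_def u_def .
    have bu: "b + u \<notin> C"
    proof
      assume bu: "b + u \<in> C"
      have "adj n u (a + u)" by (rule adj_I[of _ _ i si]) (use ij in \<open>auto simp: a_def add.commute\<close>)
      moreover have "adj n u (b + u)" by (rule adj_I[of _ _ j sj]) (use ij in \<open>auto simp: b_def add.commute\<close>)
      moreover have "0 \<noteq> b + u" by (rule neqI[of _ j]) (use ij 3 in \<open>auto simp: b_def u_def ev_def\<close>)
      moreover have "a + u \<noteq> b + u" by (rule neqI[of _ i]) (use ij 3 in \<open>auto simp: a_def b_def u_def ev_def\<close>)
      ultimately show False using LB3[OF u1 C0 c'' bu u0] n0au by blast
    qed
    obtain d where d: "d \<in> C" "adj n b d" "d \<noteq> 0"
      using SN[OF a1 C0 c'' a0 aau n0au b1 C0 b0] by blast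
    have bv: "b \<in> verts n" using b1 layer_verts by auto
    have dv: "d \<in> verts n" using d Cv by auto
    obtain m \<sigma> where m: "m < n" "\<sigma> = 1 \<or> \<sigma> = -1" "d = b + ev m \<sigma>" using adj_char[OF bv dv d(2)] by blast
    define w where "w = x + ev m \<sigma>"
    have wv: "w \<in> verts n" unfolding w_def using xv m by (simp add: verts_add verts_ev)
    have xw: "adj n x w" unfolding w_def by (rule adj_I[of _ _ m \<sigma>]) (use m in auto)
    have dw: "d = w + ev i (-si)" unfolding w_def xd m(3) b_def by (rule ext) (simp add: ev_def)
    have "adj n w d" by (rule adj_I[OF dw ij(1)]) (use ij in simp)
    then have w1: "w \<in> layer n C 1" using L1[OF wv d(1)] by blast
    have "w = a \<or> w = b \<or> w = y" using Aeq[OF xw w1] unfolding a_def b_def y_def .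
    moreover have "w \<noteq> a"
    proof
      assume "w = a"
      then have "d = 0" unfolding dw by (rule ssubst) (rule ext, simp add: a_def ev_def)
      then show False using d by simp
    qed
    moreover have "w \<noteq> y"
    proof
      assume "w = y"
      then have "d = b + u" unfolding dw by (rule ssubst) (rule ext, simp add: y_def xd b_def u_def ev_def)
      then show False using d bu by simp
    qed
    ultimately have wb: "w = b" by blast
    define x' where "x' = b + u"
    have x'v: "x' \<in> verts n" unfolding x'_def b_def u_def using ij kt by (simp add: verts_add verts_ev)
    have "nrm n x' = 2" unfolding x'_def b_def u_def using nrm_upd[OF kt(1), of "ev j sj" t] nrm_ev[OF ij(2), of sj] ij kt 3
      by (simp add: ev_def)
    then have x'2: "x' \<in> layer n C 2" using W2L2 x'v bu unfolding x'_def by blast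
    define q4 where "q4 = x' + ev i (-si)"
    have a1': "adj n x' b" by (rule adj_I[of _ _ k "-t"]) (use kt in \<open>auto simp: x'_def u_def fun_eq_iff ev_def\<close>)
    have a2': "adj n x' u" by (rule adj_I[of _ _ j "-sj"]) (use ij in \<open>auto simp: x'_def b_def fun_eq_iff ev_def\<close>)
    have a3': "adj n x' y" by (rule adj_I[of _ _ i si]) (use ij in \<open>auto simp: x'_def y_def xd b_def u_def fun_eq_iff ev_def\<close>)
    have a4': "adj n x' q4" by (rule adj_I[of _ _ i "-si"]) (use ij in \<open>auto simp: q4_def\<close>)
    have q4v: "q4 \<in> verts n" unfolding q4_def using x'v ij by (simp add: verts_add verts_ev)
    have "d = q4 + ev k (-t)" unfolding dw wb q4_def x'_def u_def b_def by (rule ext) (simp add: ev_def)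
    then have "adj n q4 d" by (rule adj_I) (use kt in auto)
    then have l4: "q4 \<in> layer n C 1" using L1[OF q4v d(1)] by blast
    have y1': "y \<in> layer n C 1" using y1 unfolding y_def .
    have "b \<noteq> u" by (rule neqI[of _ j]) (use ij 3 in \<open>auto simp: b_def u_def ev_def\<close>)
    moreover have "b \<noteq> y" by (rule neqI[of _ i]) (use ij 3 in \<open>auto simp: b_def y_def xd ev_def\<close>)
    moreover have "b \<noteq> q4" by (rule neqI[of _ i]) (use ij 3 in \<open>auto simp: b_def q4_def x'_def u_def ev_def\<close>)
    moreover have "u \<noteq> y" by (rule neqI[of _ i]) (use ij 3 in \<open>auto simp: u_def y_def xd ev_def\<close>)
    moreover have "u \<noteq> q4" by (rule neqI[of _ i]) (use ij 3 in \<open>auto simp: u_def q4_def x'_def b_def ev_def\<close>)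
    moreover have "y \<noteq> q4" by (rule neqI[of _ i]) (use ij 3 in \<open>auto simp: y_def xd q4_def x'_def b_def u_def ev_def\<close>)
    ultimately show False using LA4[OF x'2 a1' a2' a3' a4' b1 u1 y1' l4] by blast
  qed
qed

end



context crc
begin

lemma part2:
  assumes ij: "i < n" "j < n" "i \<noteq> j" "\<bar>si\<bar> = 1" "\<bar>sj\<bar> = 1"
    and xd: "x = ev i si + ev j sj" and xl: "x \<in> layer n C 2"
  shows "(\<exists>!c. c \<in> C \<and> weight n c = 4 \<and> gdist n x c = 2) \<and>
         (\<forall>c. c \<in> C \<and> weight n c = 4 \<and> gdist n x c = 2 \<longrightarrow> type3100 n c)"
proof -
  define a where "a = ev i si"
  define b where "b = ev j sj"
  have xv: "x \<in> verts n" using xl layer_verts by auto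
  have xnC: "x \<notin> C" using lay2D[OF xl] by blast
  have a1: "a \<in> layer n C 1" unfolding a_def using unit_l1 ij by blast
  have b1: "b \<in> layer n C 1" unfolding b_def using unit_l1 ij by blast
  have xa: "adj n x a" by (rule adj_I[of _ _ j "-sj"]) (use ij in \<open>auto simp: xd a_def fun_eq_iff ev_def\<close>)
  have xb: "adj n x b" by (rule adj_I[of _ _ i "-si"]) (use ij in \<open>auto simp: xd b_def fun_eq_iff ev_def\<close>)
  have dab: "a \<noteq> b" by (rule neqI[of _ i]) (use ij in \<open>auto simp: a_def b_def ev_def\<close>)
  obtain y where y: "adj n x y" "y \<in> layer n C 1" "y \<noteq> a" "y \<noteq> b"
    using LA_ex[OF xl xa xb a1 b1] by blast
  have yv: "y \<in> verts n" using y layer_verts by auto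
  obtain k t where kt0: "k < n" "t = 1 \<or> t = -1" "y = x + ev k t" using adj_char[OF xv yv y(1)] by blast
  have t1: "\<bar>t\<bar> = 1" using kt0 by auto
  have nk1: "\<not>(k = i \<and> t = -si)"
  proof
    assume "k = i \<and> t = -si"
    then have "y = b" unfolding kt0(3) xd b_def by (intro ext) (simp add: ev_def)
    then show False using y by simp
  qed
  have nk2: "\<not>(k = j \<and> t = -sj)"
  proof
    assume "k = j \<and> t = -sj"
    then have "y = a" unfolding kt0(3) xd a_def by (intro ext) (auto simp: ev_def)
    then show False using y by simp
  qed
  have Aeq: "w = ev i si \<or> w = ev j sj \<or> w = x + ev k t" if w: "adj n x w" "w \<in> layer n C 1" for w
  proof (rule ccontr)
    assume h: "\<not> ?thesis"
    then have "a \<noteq> w" "b \<noteq> w" "y \<noteq> w" using kt0 unfolding a_def b_def by auto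
    then show False using LA4[OF xl xa xb y(1) w(1) a1 b1 y(2) w(2) dab] y by metis
  qed
  have y1: "x + ev k t \<in> layer n C 1" using y kt0 by simp
  have AU1: "ev i si + ev k t \<notin> C" by (rule AU[OF ij xd xl kt0(1) t1 nk1 nk2 y1 Aeq])
  have xc: "x = ev j sj + ev i si" using xd by (simp add: add.commute)
  have AU2: "ev j sj + ev k t \<notin> C"
    by (rule AU[of j i sj si x k t]) (use ij xc xl kt0(1) t1 nk1 nk2 y1 Aeq in auto)
  have ynb: "c = y + ev k t" if c: "c \<in> C" "adj n y c" for c
  proof -
    have cv: "c \<in> verts n" using c Cv by auto
    obtain m \<sigma> where m: "m < n" "\<sigma> = 1 \<or> \<sigma> = -1" "c = y + ev m \<sigma>" using adj_char[OF yv cv c(2)] by blast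
    define w where "w = x + ev m \<sigma>"
    have wv: "w \<in> verts n" unfolding w_def using xv m by (simp add: verts_add verts_ev)
    have xw: "adj n x w" unfolding w_def by (rule adj_I[of _ _ m \<sigma>]) (use m in auto)
    have cw: "c = w + ev k t" unfolding w_def m(3) kt0(3) by (simp add: add_ac)
    have "adj n w c" by (rule adj_I[OF cw kt0(1) t1])
    then have w1: "w \<in> layer n C 1" using L1[OF wv c(1)] by blast
    have "w = ev i si \<or> w = ev j sj \<or> w = x + ev k t" using Aeq[OF xw w1] .
    then show ?thesis using AU1 AU2 c(1) cw kt0(3) by auto
  qed
  have nrmx: "nrm n x = 2" unfolding xd using nrm_upd[OF ij(2), of "ev i si" sj] nrm_ev[OF ij(1), of si] ij
    by (simp add: ev_def)
  have W4: "c = y + ev k t" if c: "c \<in> C" "weight n c = 4" "gdist n x c = 2" for c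
  proof -
    have cv: "c \<in> verts n" using c Cv by auto
    have nc: "nrm n c = 4" using c(2) nrm_ge0[of n c] by (simp add: weight_nrm)
    have ncx: "nrm n (c - x) = 2" using c(3) nrm_ge0[of n "x - c"] nrm_swap[of n x c] by (simp add: gdist_nrm)
    obtain m \<sigma> where m: "m < n" "\<sigma> = 1 \<or> \<sigma> = -1" "nrm n (c - x + ev m \<sigma>) = 1"
      using step[OF verts_diff[OF cv xv]] ncx by force
    define z where "z = x + ev m (-\<sigma>)"
    have zv: "z \<in> verts n" unfolding z_def using xv m by (simp add: verts_add verts_ev)
    have xz: "adj n x z" unfolding z_def by (rule adj_I[of _ _ m "-\<sigma>"]) (use m in auto)
    have e: "c - z = c - x + ev m \<sigma>" unfolding z_def by (rule ext) (simp add: ev_def)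
    have "nrm n (c - z) = 1" unfolding e by (fact m(3))
    then have zc: "adj n z c" by (simp only: adj_nrm)
    then have z1: "z \<in> layer n C 1" using L1[OF zv c(1)] by blast
    have "z = ev i si \<or> z = ev j sj \<or> z = y" using Aeq[OF xz z1] kt0(3) by simp
    moreover have "z \<noteq> ev i si"
    proof
      assume "z = ev i si"
      then have "nrm n z = 1" using nrm_ev[OF ij(1)] ij by simp
      then show False using nrm_adj[OF zv cv zc] nc by simp
    qed
    moreover have "z \<noteq> ev j sj"
    proof
      assume "z = ev j sj"
      then have "nrm n z = 1" using nrm_ev[OF ij(2)] ij by simp
      then show False using nrm_adj[OF zv cv zc] nc by simp
    qed
    ultimately have "z = y" by blast
    then show ?thesis using ynb c(1) zc by simp
  qed
  define c0 where "c0 = y + ev k t"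
  have c0x: "c0 = x + ev k (2*t)" unfolding c0_def kt0(3) by (rule ext) (simp add: ev_def)
  have c0C: "c0 \<in> C"
  proof -
    obtain c where "c \<in> C" "adj n y c" using lay1D[OF y(2)] by blast
    then show ?thesis using ynb c0_def by simp
  qed
  have xk: "x k = (if k = i then si else 0) + (if k = j then sj else 0)" unfolding xd by (simp add: ev_def)
  have nc0: "nrm n c0 = 4"
    unfolding c0x nrm_upd[OF kt0(1)] nrmx xk using ij kt0(2) nk1 nk2 by (auto simp: abs_if)
  have wc0: "weight n c0 = 4" using nc0 by (simp add: weight_nrm)
  have "x - c0 = ev k (-(2*t))" unfolding c0x by (rule ext) (simp add: ev_def)
  then have gc0: "gdist n x c0 = 2" using nrm_ev[OF kt0(1)] t1 by (simp add: gdist_nrm)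
  have c0v: "c0 \<in> verts n" using c0C Cv by auto
  have T: "type3100 n c0"
  proof -
    consider "k = i" | "k = j" | "k \<noteq> i" "k \<noteq> j" by blast
    then show ?thesis
    proof cases
      case 1
      then have "t = si" using nk1 t1 ij by (auto simp: abs_if split: if_splits)
      then show ?thesis unfolding type3100_def using c0v 1 ij
        by (intro conjI exI[of _ i] exI[of _ j]) (auto simp: c0x xd ev_def)
    next
      case 2
      then have "t = sj" using nk2 t1 ij by (auto simp: abs_if split: if_splits)
      then show ?thesis unfolding type3100_def using c0v 2 ij
        by (intro conjI exI[of _ j] exI[of _ i]) (auto simp: c0x xd ev_def)
    next
      case 3
      have "ev i si + ev j sj + ev k (2*t) \<in> C" using c0C c0x xd by simp
      then show ?thesis using X2110[of i j k si sj t] ij kt0(1) t1 3 by blast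
    qed
  qed
  show ?thesis
  proof
    show "\<exists>!c. c \<in> C \<and> weight n c = 4 \<and> gdist n x c = 2"
      using c0C wc0 gc0 W4 c0_def by blast
    show "\<forall>c. c \<in> C \<and> weight n c = 4 \<and> gdist n x c = 2 \<longrightarrow> type3100 n c"
      using W4 T c0_def by blast
  qed
qed

end



lemma cap_form: "cap n i \<epsilon> = {ev i (3*\<epsilon>) + ev j s | j s. j < n \<and> j \<noteq> i \<and> (s = 1 \<or> s = -1)}"
proof -
  have e: "\<And>j s. (\<lambda>k. \<epsilon> * 3 * unitv i k + s * unitv j k) = ev i (3*\<epsilon>) + ev j s"
    by (rule ext) (simp add: unitv_def ev_def)
  show ?thesis unfolding cap_def e ..
qed

lemma cap_fin: "finite (cap n i \<epsilon>)"
proof -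
  have "cap n i \<epsilon> \<subseteq> (\<lambda>(j,s). ev i (3*\<epsilon>) + ev j s) ` ({..<n} \<times> {1,-1})"
    unfolding cap_form by auto
  then show ?thesis by (rule finite_subset) simp
qed

context crc
begin

lemma capL:
  assumes i: "i < n" and e: "\<epsilon> = 1 \<or> \<epsilon> = -1"
  shows "card (cap n i \<epsilon> \<inter> C) \<le> 1"
proof -
  have fin: "finite (cap n i \<epsilon> \<inter> C)" using cap_fin by blast
  have "\<forall>p\<in>cap n i \<epsilon> \<inter> C. \<forall>q\<in>cap n i \<epsilon> \<inter> C. p = q"
  proof (intro ballI, rule ccontr)
    fix p q assume p: "p \<in> cap n i \<epsilon> \<inter> C" and q: "q \<in> cap n i \<epsilon> \<inter> C" and pq: "p \<noteq> q"
    obtain j s where js: "j < n" "j \<noteq> i" "s = 1 \<or> s = -1" "p = ev i (3*\<epsilon>) + ev j s"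
      using p unfolding cap_form by blast
    obtain j' s' where js': "j' < n" "j' \<noteq> i" "s' = 1 \<or> s' = -1" "q = ev i (3*\<epsilon>) + ev j' s'"
      using q unfolding cap_form by blast
    have e1: "\<bar>\<epsilon>\<bar> = 1" using e by auto
    define x where "x = ev i (2*\<epsilon>)"
    have xv: "x \<in> verts n" unfolding x_def using i by (simp add: verts_ev)
    have xnC: "x \<notin> C" unfolding x_def using noQ[OF i e1] .
    have "nrm n x = 2" unfolding x_def using nrm_ev[OF i] e by auto
    then have x2: "x \<in> layer n C 2" using W2L2 xv xnC by blast
    define q1 where "q1 = ev i \<epsilon>"
    define q2 where "q2 = ev i (3*\<epsilon>)"
    define q3 where "q3 = x + ev j s"
    define q4 where "q4 = x + ev j' s'"
    have a1: "adj n x q1" by (rule adj_I[of _ _ i "-\<epsilon>"]) (use i e in \<open>auto simp: x_def q1_def fun_eq_iff ev_def\<close>)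
    have a2: "adj n x q2" by (rule adj_I[of _ _ i "\<epsilon>"]) (use i e in \<open>auto simp: x_def q2_def fun_eq_iff ev_def\<close>)
    have a3: "adj n x q3" by (rule adj_I[of _ _ j s]) (use js in \<open>auto simp: q3_def\<close>)
    have a4: "adj n x q4" by (rule adj_I[of _ _ j' s']) (use js' in \<open>auto simp: q4_def\<close>)
    have l1: "q1 \<in> layer n C 1" unfolding q1_def using unit_l1 i e1 by blast
    have pC: "p \<in> C" and qC: "q \<in> C" using p q by auto
    have "adj n q2 p" by (rule adj_I[of _ _ j s]) (use js in \<open>auto simp: q2_def\<close>)
    then have l2: "q2 \<in> layer n C 1" using L1[OF _ pC] i unfolding q2_def by (simp add: verts_ev)
    have p3: "p = q3 + ev i \<epsilon>" unfolding js(4) q3_def x_def by (rule ext) (simp add: ev_def)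
    have q3v: "q3 \<in> verts n" unfolding q3_def using xv js by (simp add: verts_add verts_ev)
    have "adj n q3 p" by (rule adj_I[OF p3 i e1])
    then have l3: "q3 \<in> layer n C 1" using L1[OF q3v pC] by blast
    have q4e: "q = q4 + ev i \<epsilon>" unfolding js'(4) q4_def x_def by (rule ext) (simp add: ev_def)
    have q4v: "q4 \<in> verts n" unfolding q4_def using xv js' by (simp add: verts_add verts_ev)
    have "adj n q4 q" by (rule adj_I[OF q4e i e1])
    then have l4: "q4 \<in> layer n C 1" using L1[OF q4v qC] by blast
    have "q1 \<noteq> q2" by (rule neqI[of _ i]) (use e in \<open>auto simp: q1_def q2_def ev_def\<close>)
    moreover have "q1 \<noteq> q3" by (rule neqI[of _ i]) (use e js in \<open>auto simp: q1_def q3_def x_def ev_def\<close>)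
    moreover have "q1 \<noteq> q4" by (rule neqI[of _ i]) (use e js' in \<open>auto simp: q1_def q4_def x_def ev_def\<close>)
    moreover have "q2 \<noteq> q3" by (rule neqI[of _ i]) (use e js in \<open>auto simp: q2_def q3_def x_def ev_def\<close>)
    moreover have "q2 \<noteq> q4" by (rule neqI[of _ i]) (use e js' in \<open>auto simp: q2_def q4_def x_def ev_def\<close>)
    moreover have "q3 \<noteq> q4" using p3 q4e pq by auto
    ultimately show False using LA4[OF x2 a1 a2 a3 a4 l1 l2 l3 l4] by blast
  qed
  then show ?thesis using card_le_Suc0_iff_eq[OF fin] by simp
qed

lemma card3100: "card {x \<in> C. type3100 n x} \<le> 2 * n"
proof -
  define I where "I = {..<n} \<times> {1, -1::int}"
  define U where "U = (\<Union>p\<in>I. cap n (fst p) (snd p) \<inter> C)"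
  have finI: "finite I" unfolding I_def by simp
  have sub: "{x \<in> C. type3100 n x} \<subseteq> U"
  proof
    fix x assume x: "x \<in> {x \<in> C. type3100 n x}"
    then obtain i j where ij: "i < n" "j < n" "i \<noteq> j" "\<bar>x i\<bar> = 3" "\<bar>x j\<bar> = 1"
      "\<forall>k. k \<noteq> i \<and> k \<noteq> j \<longrightarrow> x k = 0"
      unfolding type3100_def by blast
    define \<epsilon> where "\<epsilon> = (if x i = 3 then 1 else (-1::int))"
    have "x = ev i (3*\<epsilon>) + ev j (x j)"
    proof (rule ext)
      fix k show "x k = (ev i (3*\<epsilon>) + ev j (x j)) k"
        using ij by (cases "k = i"; cases "k = j") (auto simp: ev_def \<epsilon>_def abs_if split: if_splits)
    qed
    moreover have "x j = 1 \<or> x j = -1" using ij by auto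
    ultimately have "x \<in> cap n i \<epsilon>" unfolding cap_form using ij by blast
    moreover have "(i, \<epsilon>) \<in> I" unfolding I_def \<epsilon>_def using ij by auto
    ultimately show "x \<in> U" unfolding U_def using x by force
  qed
  have finU: "finite U" unfolding U_def using finI cap_fin by blast
  have "card {x \<in> C. type3100 n x} \<le> card U" by (rule card_mono[OF finU sub])
  also have "\<dots> \<le> (\<Sum>p\<in>I. card (cap n (fst p) (snd p) \<inter> C))" unfolding U_def by (rule card_UN_le[OF finI])
  also have "\<dots> \<le> (\<Sum>p\<in>I. 1)" by (rule sum_mono) (use capL in \<open>auto simp: I_def\<close>)
  also have "\<dots> = 2 * n" unfolding I_def by (simp add: card_cartesian_product)
  finally show ?thesis .
qed

end

theorem mainTheorem4:
  fixes n \<rho> :: nat and C :: "(nat \<Rightarrow> int) set" and \<alpha> :: "nat \<Rightarrow> nat \<Rightarrow> nat"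
  assumes "n \<ge> 2"
    and "is_CRC n C \<rho> \<alpha>"
    and "r_null 2 \<alpha>"
    and "\<rho> \<ge> 2"
    and "\<alpha> 1 0 \<le> 2"
    and "\<alpha> 2 1 = 3"
    and "zerov \<in> C"
  shows "(\<forall>i<n. \<forall>\<epsilon>\<in>{1, -1}. card (cap n i \<epsilon> \<inter> C) \<le> 1)
       \<and> card {x \<in> C. type3100 n x} \<le> 2 * n
       \<and> (\<forall>x. type1100 n x \<and> x \<in> layer n C 2 \<longrightarrow>
            (\<exists>!c. c \<in> C \<and> weight n c = 4 \<and> gdist n x c = 2) \<and>
            (\<forall>c. c \<in> C \<and> weight n c = 4 \<and> gdist n x c = 2 \<longrightarrow> type3100 n c))"
proof -
  interpret crc n C \<alpha>
  proof
    show "2 \<le> n" by fact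
    show "C \<subseteq> verts n" using assms(2) by (simp add: is_CRC_def)
    show "\<And>i j v. v \<in> layer n C i \<Longrightarrow> card {w \<in> verts n. adj n v w \<and> w \<in> layer n C j} = \<alpha> i j"
      using assms(2) by (simp add: is_CRC_def)
    show "\<alpha> 0 0 = 0" using assms(3) by (simp add: r_null_def)
    show "\<alpha> 1 1 = 0" using assms(3) by (simp add: r_null_def)
    show "\<alpha> 1 0 \<le> 2" by fact
    show "\<alpha> 2 1 = 3" by fact
    show "0 \<in> C" using assms(7) by (simp add: zerov0)
  qed
  have P1: "\<forall>i<n. \<forall>\<epsilon>\<in>{1, -1}. card (cap n i \<epsilon> \<inter> C) \<le> 1" using capL by auto
  have P3: "(\<exists>!c. c \<in> C \<and> weight n c = 4 \<and> gdist n x c = 2) \<and>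
            (\<forall>c. c \<in> C \<and> weight n c = 4 \<and> gdist n x c = 2 \<longrightarrow> type3100 n c)"
    if x: "type1100 n x" "x \<in> layer n C 2" for x
  proof -
    obtain i j where ij: "i < n" "j < n" "i \<noteq> j" "\<bar>x i\<bar> = 1" "\<bar>x j\<bar> = 1"
      "\<forall>k. k \<noteq> i \<and> k \<noteq> j \<longrightarrow> x k = 0"
      using x(1) unfolding type1100_def by blast
    have xd: "x = ev i (x i) + ev j (x j)"
    proof (rule ext)
      fix k show "x k = (ev i (x i) + ev j (x j)) k"
        using ij by (cases "k = i"; cases "k = j") (auto simp: ev_def)
    qed
    show ?thesis by (rule part2[OF ij(1-5) xd x(2)])
  qed
  have P2: "\<forall>x. type1100 n x \<and> x \<in> layer n C 2 \<longrightarrow>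
            (\<exists>!c. c \<in> C \<and> weight n c = 4 \<and> gdist n x c = 2) \<and>
            (\<forall>c. c \<in> C \<and> weight n c = 4 \<and> gdist n x c = 2 \<longrightarrow> type3100 n c)"
  proof (intro allI impI)
    fix x assume "type1100 n x \<and> x \<in> layer n C 2"
    then have h: "type1100 n x" "x \<in> layer n C 2" by auto
    show "(\<exists>!c. c \<in> C \<and> weight n c = 4 \<and> gdist n x c = 2) \<and>
            (\<forall>c. c \<in> C \<and> weight n c = 4 \<and> gdist n x c = 2 \<longrightarrow> type3100 n c)"
      by (rule P3[OF h])
  qed
  show ?thesis
    apply (intro conjI)
      apply (fact P1)
     apply (fact card3100)
    apply (fact P2)
    done
qed


end
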